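(* Let $K$ be a field, $\mathcal{H}$ a simple hypergraph on $\{x_1,\dots,x_n\}$ with edges $S_1,\dots,S_m$, let $i,j$ be integers, and let $\mathcal{B}_{i,j}$ be the set of basis elements $\overline{e_{\ell_1,\dots,\ell_i}}$ of $\overline{T}_i$ with $\overline{e_{\ell_1,\dots,\ell_i}}\in\mathrm{Ker}\,\overline{\partial}_i\setminus\mathrm{Im}\,\overline{\partial}_{i+1}$ and $|\bigcup_{k=1}^iS_{\ell_k}|=j$. Then (number of self semi-induced matchings in $\mathcal{H}$ of type $(i,j)$) $\le|\mathcal{B}_{i,j}|\le$ (number of self-contained semi-induced matchings in $\mathcal{H}$ of type $(i,j)$).
   Context: A simple hypergraph $\mathcal{H}$ on $\{x_1,\dots,x_n\}$ is a set $\mathcal{E}(\mathcal{H})$ of subsets (edges) of cardinality at least $2$, none contained in another. With edges ordered $S_1,\dots,S_m$, let $\overline{T}_0=K$ and for $i\ge1$ let $\overline{T}_i$ be the $K$-vector space with basis $\overline{e_{\ell_1,\dots,\ell_i}}$, $1\le\ell_1<\dots<\ell_i\le m$, graded by $\deg\overline{e_{\ell_1,\dots,\ell_i}}=|\bigcup_{t}S_{\ell_t}|$, with differential $\overline{\partial}_i(\overline{e_{\ell_1,\dots,\ell_i}})=\sum_{k:\,S_{\ell_k}\subseteq\bigcup_{t\neq k}S_{\ell_t}}(-1)^k\,\overline{e_{\ell_1,\dots,\widehat{\ell_k},\dots,\ell_i}}$ (the Taylor resolution of $R/I(\mathcal{H})$ tensored with $K$). For a family $\mathcal{S}=\{E_1,\dots,E_i\}$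 of distinct edges, its type is $(i,j)$ with $j=|\bigcup_\ell E_\ell|$. $\mathcal{S}$ is a self semi-induced matching if no edge outside $\mathcal{S}$ is contained in $\bigcup_\ell E_\ell$ and for all $k$, $E_k\nsubseteq\bigcup_{\ell\neq k}E_\ell$. It is a self-contained semi-induced matching if (i) for each edge $E\notin\mathcal{S}$, either $E\nsubseteq\bigcup_\ell E_\ell$ or there is $k$ with $E_k\subseteq E\cup\bigcup_{\ell\neq k}E_\ell$, and (ii) for all $k$, $E_k\nsubseteq\bigcup_{\ell\neq k}E_\ell$. *)

theory Defs
  imports Main
begin

definition simple_hypergraph :: "'a set \<Rightarrow> 'a set set \<Rightarrow> bool" where
  "simple_hypergraph X Es \<longleftrightarrow> finite X \<and> (\<forall>E\<in>Es. E \<subseteq> X \<and> card E \<ge> 2)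
     \<and> (\<forall>E\<in>Es. \<forall>F\<in>Es. E \<subseteq> F \<longrightarrow> E = F)"

text \<open>Index sets \<open>{l_1 < ... < l_i}\<close> of basis elements of \<open>T_i\<close>, edges ordered S 1, ..., S m.\<close>
definition taylor_basis :: "nat \<Rightarrow> nat \<Rightarrow> nat set set" where
  "taylor_basis m i = {L. L \<subseteq> {1..m} \<and> card L = i}"

text \<open>Basis vector e_L; vectors are finitely supported coefficient functions.\<close>
definition basis_vec :: "nat set \<Rightarrow> nat set \<Rightarrow> 'k::field" where
  "basis_vec L = (\<lambda>L'. if L' = L then 1 else 0)"

text \<open>Differential of a basis element: position of l in L is card {l' in L. l' < l} + 1.\<close>
definition taylor_dbasis :: "(nat \<Rightarrow> 'a set) \<Rightarrow> nat set \<Rightarrow> nat set \<Rightarrow> 'k::field" where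
  "taylor_dbasis S L = (\<lambda>L'. \<Sum>l\<in>L.
      (if L' = L - {l} \<and> S l \<subseteq> \<Union>(S ` (L - {l}))
       then (- 1) ^ (card {l'\<in>L. l' < l} + 1) else 0))"

definition taylor_d :: "(nat \<Rightarrow> 'a set) \<Rightarrow> nat \<Rightarrow> nat \<Rightarrow> (nat set \<Rightarrow> 'k::field) \<Rightarrow> nat set \<Rightarrow> 'k" where
  "taylor_d S m i v = (\<lambda>L'. \<Sum>L\<in>taylor_basis m i. v L * taylor_dbasis S L L')"

definition in_T :: "nat \<Rightarrow> nat \<Rightarrow> (nat set \<Rightarrow> 'k::field) \<Rightarrow> bool" where
  "in_T m i v \<longleftrightarrow> (\<forall>L. L \<notin> taylor_basis m i \<longrightarrow> v L = 0)"

definition taylor_B :: "'k::field itself \<Rightarrow> (nat \<Rightarrow> 'a set) \<Rightarrow> nat \<Rightarrow> nat \<Rightarrow> nat \<Rightarrow> nat set set" where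
  "taylor_B _ S m i j = {L \<in> taylor_basis m i.
      taylor_d S m i (basis_vec L :: nat set \<Rightarrow> 'k) = (\<lambda>_. 0)
    \<and> \<not> (\<exists>v :: nat set \<Rightarrow> 'k. in_T m (i+1) v \<and> taylor_d S m (i+1) v = basis_vec L)
    \<and> card (\<Union>(S ` L)) = j}"

definition has_type :: "'a set set \<Rightarrow> nat \<Rightarrow> nat \<Rightarrow> bool" where
  "has_type F i j \<longleftrightarrow> card F = i \<and> card (\<Union>F) = j"

definition self_semi_induced :: "'a set set \<Rightarrow> 'a set set \<Rightarrow> bool" where
  "self_semi_induced Es F \<longleftrightarrow> F \<subseteq> Es
     \<and> (\<forall>E\<in>Es - F. \<not> E \<subseteq> \<Union>F)
     \<and> (\<forall>E\<in>F. \<not> E \<subseteq> \<Union>(F - {E}))"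

definition self_contained_semi_induced :: "'a set set \<Rightarrow> 'a set set \<Rightarrow> bool" where
  "self_contained_semi_induced Es F \<longleftrightarrow> F \<subseteq> Es
     \<and> (\<forall>E\<in>Es - F. \<not> E \<subseteq> \<Union>F \<or> (\<exists>Ek\<in>F. Ek \<subseteq> E \<union> \<Union>(F - {Ek})))
     \<and> (\<forall>E\<in>F. \<not> E \<subseteq> \<Union>(F - {E}))"

end

theory Submission
  imports Defs
begin

lemma tb_finite: "finite (taylor_basis m i)"
proof -
  have "taylor_basis m i \<subseteq> Pow {1..m}" unfolding taylor_basis_def by auto
  then show ?thesis by (rule finite_subset) simp
qed

lemma d_scaled:
  assumes "L \<in> taylor_basis m i"
  shows "taylor_d S m i (\<lambda>L'. (c::'k::field) * basis_vec L L') = (\<lambda>L'. c * taylor_dbasis S L L')"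
proof (rule ext)
  fix L'
  have "taylor_d S m i (\<lambda>L'. c * basis_vec L L') L'
     = (\<Sum>L''\<in>taylor_basis m i. if L'' = L then c * taylor_dbasis S L L' else 0)"
    unfolding taylor_d_def basis_vec_def by (rule sum.cong) auto
  also have "\<dots> = c * taylor_dbasis S L L'"
    using assms tb_finite by (simp add: sum.delta')
  finally show "taylor_d S m i (\<lambda>L'. c * basis_vec L L') L' = c * taylor_dbasis S L L'" .
qed

lemma d_basis:
  assumes "L \<in> taylor_basis m i"
  shows "taylor_d S m i (basis_vec L :: nat set \<Rightarrow> 'k::field) = taylor_dbasis S L"
  using d_scaled[OF assms, of S "1::'k"] by (simp add: fun_eq_iff)

lemma dbasis_at:
  assumes "finite L" "l \<in> L"
  shows "(taylor_dbasis S L (L - {l}) :: 'k::field) =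
     (if S l \<subseteq> \<Union>(S ` (L - {l})) then (- 1) ^ (card {l'\<in>L. l' < l} + 1) else 0)"
proof -
  have "(taylor_dbasis S L (L - {l}) :: 'k) = (\<Sum>l'\<in>L.
      (if L - {l} = L - {l'} \<and> S l' \<subseteq> \<Union>(S ` (L - {l'}))
       then (- 1) ^ (card {l''\<in>L. l'' < l'} + 1) else 0))"
    unfolding taylor_dbasis_def by simp
  also have "\<dots> = (if S l \<subseteq> \<Union>(S ` (L - {l})) then (- 1) ^ (card {l'\<in>L. l' < l} + 1) else 0)
     + (\<Sum>l'\<in>L - {l}.
      (if L - {l} = L - {l'} \<and> S l' \<subseteq> \<Union>(S ` (L - {l'}))
       then (- 1) ^ (card {l''\<in>L. l'' < l'} + 1) else (0::'k)))"
    using assms by (simp add: sum.remove)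
  also have "(\<Sum>l'\<in>L - {l}.
      (if L - {l} = L - {l'} \<and> S l' \<subseteq> \<Union>(S ` (L - {l'}))
       then (- 1) ^ (card {l''\<in>L. l'' < l'} + 1) else (0::'k))) = 0"
  proof (rule sum.neutral, intro ballI)
    fix l' assume "l' \<in> L - {l}"
    then have "L - {l} \<noteq> L - {l'}" using assms by blast
    then show "(if L - {l} = L - {l'} \<and> S l' \<subseteq> \<Union>(S ` (L - {l'}))
       then (- 1) ^ (card {l''\<in>L. l'' < l'} + 1) else (0::'k)) = 0" by simp
  qed
  finally show ?thesis by simp
qed

lemma dbasis_zero:
  assumes "\<And>l. l \<in> L \<Longrightarrow> \<not> (L' = L - {l} \<and> S l \<subseteq> \<Union>(S ` (L - {l})))"
  shows "(taylor_dbasis S L L' :: 'k::field) = 0"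
  unfolding taylor_dbasis_def using assms by (intro sum.neutral) auto

theorem lemma2p4:
  fixes X :: "'a set" and Es :: "'a set set" and S :: "nat \<Rightarrow> 'a set"
    and m i j :: nat
  assumes "simple_hypergraph X Es"
    and "bij_betw S {1..m} Es"
  shows "card {F. self_semi_induced Es F \<and> has_type F i j}
           \<le> card (taylor_B TYPE('k::field) S m i j)
       \<and> card (taylor_B TYPE('k::field) S m i j)
           \<le> card {F. self_contained_semi_induced Es F \<and> has_type F i j}"
proof
  have injS: "inj_on S {1..m}" and imS: "S ` {1..m} = Es"
    using assms(2) by (auto simp: bij_betw_def)
  have finEs: "finite Es" using imS by auto
  let ?B = "taylor_B TYPE('k::field) S m i j"
  have finB: "finite ?B"
    using tb_finite[of m i] unfolding taylor_B_def by (rule finite_subset[rotated]) auto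
  show "card {F. self_semi_induced Es F \<and> has_type F i j} \<le> card ?B"
  proof (rule card_inj_on_le[OF _ _ finB])
    let ?f = "\<lambda>F. {l\<in>{1..m}. S l \<in> F}"
    have backf: "\<And>F. F \<subseteq> Es \<Longrightarrow> S ` ?f F = F" using imS by auto
    show "inj_on ?f {F. self_semi_induced Es F \<and> has_type F i j}"
    proof (rule inj_onI)
      fix F G assume F: "F \<in> {F. self_semi_induced Es F \<and> has_type F i j}"
        and G: "G \<in> {F. self_semi_induced Es F \<and> has_type F i j}"
        and eq: "?f F = ?f G"
      have "F \<subseteq> Es" "G \<subseteq> Es" using F G by (auto simp: self_semi_induced_def)
      then have "F = S ` ?f F" "G = S ` ?f G" using backf by auto
      then show "F = G" using eq by simp
    qed
    show "?f ` {F. self_semi_induced Es F \<and> has_type F i j} \<subseteq> ?B"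
    proof (rule image_subsetI, clarify)
      fix F assume ssi: "self_semi_induced Es F" and ty: "has_type F i j"
      define L where "L = ?f F"
      have FE: "F \<subseteq> Es" using ssi by (simp add: self_semi_induced_def)
      have SL: "S ` L = F" using backf[OF FE] by (simp add: L_def)
      have L1m: "L \<subseteq> {1..m}" by (auto simp: L_def)
      have injL: "inj_on S L" using injS L1m inj_on_subset by blast
      have cardL: "card L = i" using ty SL card_image[OF injL] by (simp add: has_type_def)
      have finL: "finite L" using L1m finite_subset by blast
      have LB: "L \<in> taylor_basis m i" using L1m cardL by (simp add: taylor_basis_def)
      have SLr: "S ` (L - {l}) = F - {S l}" if "l \<in> L" for l
        using that SL injL by (auto simp: inj_on_def)
      have d0: "taylor_d S m i (basis_vec L :: nat set \<Rightarrow> 'k) = (\<lambda>_. 0)"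
      proof (rule ext)
        fix L'
        show "taylor_d S m i (basis_vec L :: nat set \<Rightarrow> 'k) L' = 0"
          unfolding d_basis[OF LB]
        proof (rule dbasis_zero)
          fix l assume "l \<in> L"
          then have "S l \<in> F" "\<not> S l \<subseteq> \<Union>(F - {S l})" using ssi SL by (auto simp: self_semi_induced_def)
          then show "\<not> (L' = L - {l} \<and> S l \<subseteq> \<Union>(S ` (L - {l})))" using SLr[OF \<open>l \<in> L\<close>] by auto
        qed
      qed
      have nim: "\<not> (\<exists>v :: nat set \<Rightarrow> 'k. in_T m (i+1) v \<and> taylor_d S m (i+1) v = basis_vec L)"
      proof
        assume "\<exists>v :: nat set \<Rightarrow> 'k. in_T m (i+1) v \<and> taylor_d S m (i+1) v = basis_vec L"
        then obtain v :: "nat set \<Rightarrow> 'k" where "taylor_d S m (i+1) v = basis_vec L" by blast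
        then have "taylor_d S m (i+1) v L = 1" by (simp add: basis_vec_def)
        moreover have "taylor_d S m (i+1) v L = 0"
          unfolding taylor_d_def
        proof (rule sum.neutral, intro ballI)
          fix L'' assume L''B: "L'' \<in> taylor_basis m (i+1)"
          have "taylor_dbasis S L'' L = (0::'k)"
          proof (rule dbasis_zero)
            fix l assume lL'': "l \<in> L''"
            show "\<not> (L = L'' - {l} \<and> S l \<subseteq> \<Union>(S ` (L'' - {l})))"
            proof
              assume h: "L = L'' - {l} \<and> S l \<subseteq> \<Union>(S ` (L'' - {l}))"
              have "l \<notin> L" using h by auto
              moreover have "l \<in> {1..m}" using lL'' L''B by (auto simp: taylor_basis_def)
              ultimately have "S l \<notin> F" by (auto simp: L_def)
              moreover have "S l \<in> Es" using \<open>l \<in> {1..m}\<close> imS by auto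
              moreover have "S l \<subseteq> \<Union>F" using h SL by auto
              ultimately show False using ssi by (auto simp: self_semi_induced_def)
            qed
          qed
          then show "v L'' * taylor_dbasis S L'' L = 0" by simp
        qed
        ultimately show False by simp
      qed
      have "card (\<Union>(S ` L)) = j" using ty SL by (simp add: has_type_def)
      then have "L \<in> ?B" unfolding taylor_B_def using LB d0 nim by blast
      then show "?f F \<in> ?B" by (simp only: L_def)
    qed
  qed
next
  have injS: "inj_on S {1..m}" and imS: "S ` {1..m} = Es"
    using assms(2) by (auto simp: bij_betw_def)
  have finEs: "finite Es" using imS by auto
  let ?B = "taylor_B TYPE('k::field) S m i j"
  have finR: "finite {F. self_contained_semi_induced Es F \<and> has_type F i j}"
  proof (rule finite_subset)
    show "{F. self_contained_semi_induced Es F \<and> has_type F i j} \<subseteq> Pow Es"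
      by (auto simp: self_contained_semi_induced_def)
    show "finite (Pow Es)" using finEs by simp
  qed
  show "card ?B \<le> card {F. self_contained_semi_induced Es F \<and> has_type F i j}"
  proof (rule card_inj_on_le[OF _ _ finR])
    show "inj_on (\<lambda>L. S ` L) ?B"
      unfolding inj_on_def taylor_B_def taylor_basis_def
      using injS by (auto simp: inj_on_image_eq_iff)
    show "(\<lambda>L. S ` L) ` ?B \<subseteq> {F. self_contained_semi_induced Es F \<and> has_type F i j}"
    proof (rule image_subsetI)
      fix L assume LinB: "L \<in> ?B"
      then have LB: "L \<in> taylor_basis m i"
        and d0: "taylor_d S m i (basis_vec L :: nat set \<Rightarrow> 'k) = (\<lambda>_. 0)"
        and nim: "\<not> (\<exists>v :: nat set \<Rightarrow> 'k. in_T m (i+1) v \<and> taylor_d S m (i+1) v = basis_vec L)"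
        and cj: "card (\<Union>(S ` L)) = j"
        by (auto simp: taylor_B_def)
      have L1m: "L \<subseteq> {1..m}" and cardL: "card L = i" using LB by (auto simp: taylor_basis_def)
      have injL: "inj_on S L" using injS L1m inj_on_subset by blast
      have finL: "finite L" using L1m finite_subset by blast
      let ?F = "S ` L"
      have SLr: "S ` (L - {l}) = ?F - {S l}" if "l \<in> L" for l
        using that injL by (auto simp: inj_on_def)
      have ii: "\<forall>E\<in>?F. \<not> E \<subseteq> \<Union>(?F - {E})"
      proof
        fix E assume "E \<in> ?F"
        then obtain l where l: "l \<in> L" "E = S l" by auto
        have "taylor_dbasis S L (L - {l}) = (0::'k)"
          using d0 unfolding d_basis[OF LB] by (simp add: fun_eq_iff)
        have "\<not> S l \<subseteq> \<Union>(S ` (L - {l}))"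
        proof
          assume "S l \<subseteq> \<Union>(S ` (L - {l}))"
          then have "taylor_dbasis S L (L - {l}) = ((- 1) ^ (card {l'\<in>L. l' < l} + 1) :: 'k)"
            using dbasis_at[OF finL l(1), of S] by simp
          moreover have "((- 1) ^ (card {l'\<in>L. l' < l} + 1) :: 'k) \<noteq> 0" by simp
          ultimately show False using \<open>taylor_dbasis S L (L - {l}) = 0\<close> by simp
        qed
        then show "\<not> E \<subseteq> \<Union>(?F - {E})" using SLr[OF l(1)] l by simp
      qed
      have i: "\<forall>E\<in>Es - ?F. \<not> E \<subseteq> \<Union>?F \<or> (\<exists>Ek\<in>?F. Ek \<subseteq> E \<union> \<Union>(?F - {Ek}))"
      proof (intro ballI)
        fix E assume EE: "E \<in> Es - ?F"
        show "\<not> E \<subseteq> \<Union>?F \<or> (\<exists>Ek\<in>?F. Ek \<subseteq> E \<union> \<Union>(?F - {Ek}))"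
      proof (rule ccontr)
        assume neg: "\<not> (\<not> E \<subseteq> \<Union>?F \<or> (\<exists>Ek\<in>?F. Ek \<subseteq> E \<union> \<Union>(?F - {Ek})))"
        have E: "E \<in> Es" "E \<notin> ?F" using EE by auto
        have E3: "E \<subseteq> \<Union>?F" using neg by simp
        have nk: "\<forall>Ek\<in>?F. \<not> Ek \<subseteq> E \<union> \<Union>(?F - {Ek})" using neg by simp
        obtain l where l: "l \<in> {1..m}" "E = S l" using E(1) imS by auto
        have lL: "l \<notin> L" using E(2) l by auto
        define L2 where "L2 = insert l L"
        have L2B: "L2 \<in> taylor_basis (m) (i+1)"
          using L1m l lL finL cardL by (simp add: taylor_basis_def L2_def)
        have finL2: "finite L2" using finL by (simp add: L2_def)
        have L2l: "L2 - {l} = L" using lL by (simp add: L2_def)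
        define p where "p = card {l'\<in>L2. l' < l} + 1"
        have dL2: "taylor_dbasis S L2 L' = (if L' = L then (- 1) ^ p else (0::'k))" for L'
        proof (cases "L' = L")
          case True
          have "S l \<subseteq> \<Union>(S ` (L2 - {l}))" using E3 l L2l by simp
          then show ?thesis using True dbasis_at[OF finL2, of l S] L2l
            by (simp add: p_def L2_def)
        next
          case False
          have "taylor_dbasis S L2 L' = (0::'k)"
          proof (rule dbasis_zero)
            fix k assume k: "k \<in> L2"
            show "\<not> (L' = L2 - {k} \<and> S k \<subseteq> \<Union>(S ` (L2 - {k})))"
            proof (cases "k = l")
              case True then show ?thesis using False L2l by simp
            next
              case kl: False
              then have kL: "k \<in> L" using k by (simp add: L2_def)
              have "S ` (L2 - {k}) = insert (S l) (S ` (L - {k}))"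
                using kl by (auto simp: L2_def)
              then have "\<Union>(S ` (L2 - {k})) = E \<union> \<Union>(?F - {S k})"
                using SLr[OF kL] l by simp
              moreover have "\<not> S k \<subseteq> E \<union> \<Union>(?F - {S k})" using nk kL by blast
              ultimately show ?thesis by simp
            qed
          qed
          then show ?thesis using False by simp
        qed
        define v where "v = (\<lambda>L'. ((- 1) ^ p :: 'k) * basis_vec L2 L')"
        have "in_T m (i+1) v"
          using L2B by (auto simp: in_T_def v_def basis_vec_def)
        moreover have "taylor_d S m (i+1) v = basis_vec L"
          unfolding v_def d_scaled[OF L2B]
        proof (rule ext)
          fix L'
          have sq: "((- 1::'k) ^ p) * ((- 1) ^ p) = 1" by (simp flip: power_mult_distrib)
          show "(- 1 :: 'k) ^ p * taylor_dbasis S L2 L' = basis_vec L L'"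
          proof (cases "L' = L")
            case True
            have "taylor_dbasis S L2 L' = (- 1 :: 'k) ^ p" using dL2[of L'] True by simp
            then have "(- 1) ^ p * taylor_dbasis S L2 L' = (1::'k)" using sq by (simp only:)
            then show ?thesis using True by (simp add: basis_vec_def)
          next
            case False
            then show ?thesis using dL2[of L'] by (simp add: basis_vec_def)
          qed
        qed
        ultimately show False using nim by blast
      qed
      qed
      have "?F \<subseteq> Es" using L1m imS by auto
      then show "?F \<in> {F. self_contained_semi_induced Es F \<and> has_type F i j}"
        using i ii cj cardL card_image[OF injL]
        by (simp add: self_contained_semi_induced_def has_type_def)
    qed
  qed
qed

end
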